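(* Let $\mathcal{K}=(\mathcal{R},\mathcal{T})$ be an ME-consistent $\mathcal{ALCP}$ knowledge base over $\mathcal{L}$, let $C,D$ be concepts, let $\phi\in\mathcal{L}$ be a consequence formula for $C\sqsubseteq D$ w.r.t. $\mathcal{T}$, let $\psi\in\mathcal{L}$ be a consequence formula for the strong non-subsumption of $C$ by $D$ w.r.t. $\mathcal{T}$, and let $\kappa\in\mathcal{L}$. Then $\mathcal{B}^{s}_{\mathcal{K}}(C\sqsubseteq D\mid\kappa)=P^{ME}_{\mathcal{R}}(\phi\mid\kappa)$ and $\mathcal{B}^{c}_{\mathcal{K}}(C\sqsubseteq D\mid\kappa)=1-P^{ME}_{\mathcal{R}}(\psi\mid\kappa)$.
   Context: $\mathcal{L}$ is a propositional language over a finite set of variables; $\mathrm{Int}(\mathcal{L})$ is the set of truth assignments. A probability distribution over $\mathcal{L}$ is $P:\mathrm{Int}(\mathcal{L})\to[0,1]$ summing to $1$, with $P(\phi)=\sum_{v\models\phi}P(v)$ and $P(\phi\mid\kappa)=P(\phi\wedge\kappa)/P(\kappa)$. A probabilistic constraint is $c_0+\sum_{i=1}^k c_i\,\mathsf{p}(\phi_i)\ge 0$ ($c_i\in\mathbb{R}$, $\phi_i\in\mathcal{L}$), satisfied by $P$ iff $c_0+\sum_ic_iP(\phi_i)\ge0$; $\mathrm{Mod}(\mathcal{R})$ is the set of distributions satisfying all constraints in $\mathcal{R}$; for consistent $\mathcal{R}$, $P^{ME}_{\mathcal{R}}$ is the unique maximizer in $\mathrm{Mod}(\mathcal{R})$ of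 $H(P)=-\sum_vP(v)\log P(v)$. Concepts: $C::=A\mid\neg C\mid C\sqcap C\mid\exists r.C$. An $\mathcal{L}$-GCI is $\langle C\sqsubseteq D:\kappa\rangle$, $\kappa\in\mathcal{L}$; an $\mathcal{L}$-TBox is a finite set of them; a KB is $\mathcal{K}=(\mathcal{R},\mathcal{T})$. A possible world $\mathcal{I}=(\Delta^{\mathcal{I}},\cdot^{\mathcal{I}},v^{\mathcal{I}})$ is a classical $\mathcal{ALC}$ interpretation together with $v^{\mathcal{I}}\in\mathrm{Int}(\mathcal{L})$; it models $\langle C\sqsubseteq D:\kappa\rangle$ iff $v^{\mathcal{I}}\not\models\kappa$ or $C^{\mathcal{I}}\subseteq D^{\mathcal{I}}$. For $w\in\mathrm{Int}(\mathcal{L})$, $\mathcal{T}_w=\{C\sqsubseteq D\mid\langle C\sqsubseteq D:\kappa\rangle\in\mathcal{T}, w\models\kappa\}$; $\mathcal{T}_w\models C\sqsubseteq D$ means $C^{\mathcal{I}}\subseteq D^{\mathcal{I}}$ in every classical interpretation satisfying all inclusions of $\mathcal{T}_w$; $C$ is strongly non-subsumed by $D$ w.r.t. $\mathcal{T}_w$ iff $C^{\mathcal{I}}\not\subseteq D^{\mathcal{I}}$ in every such interpretation. A formula $\phi$ is a consequence formula for $C\sqsubseteq D$ (resp. for strong non-subsumption of $C$ by $D$) w.r.t. $\mathcal{T}$ iff for every $w\in\mathrm{Int}(\mathcal{L})$: $w\models\phi$ iff $\mathcal{T}_w\models C\sqsubseteq D$ (resp. iff $C$ is strongly non-subsumed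 by $D$ w.r.t. $\mathcal{T}_w$). An $\mathcal{ALCP}$-interpretation $\mathcal{P}=(\mathfrak{I},P_{\mathfrak{I}})$ is a nonempty finite set of possible worlds with a probability distribution on it; $P^{\mathcal{P}}(v)=\sum_{\mathcal{I}\in\mathfrak{I},v^{\mathcal{I}}=v}P_{\mathfrak{I}}(\mathcal{I})$. $\mathcal{P}$ is an ME-$\mathcal{ALCP}$-model of $\mathcal{K}$ iff all its worlds model every GCI of $\mathcal{T}$ and $P^{\mathcal{P}}=P^{ME}_{\mathcal{R}}$; $\mathrm{Mod}_{ME}(\mathcal{K})$ is the set of these; $\mathcal{K}$ is ME-consistent iff it is nonempty. $\Pr_{\mathcal{P}}(C\sqsubseteq D\mid\kappa)=\big(\sum_{\mathcal{I}\in\mathfrak{I},v^{\mathcal{I}}\models\kappa,C^{\mathcal{I}}\subseteq D^{\mathcal{I}}}P_{\mathfrak{I}}(\mathcal{I})\big)/\big(\sum_{\mathcal{I}\in\mathfrak{I},v^{\mathcal{I}}\models\kappa}P_{\mathfrak{I}}(\mathcal{I})\big)$. $\mathcal{B}^{s}_{\mathcal{K}}(C\sqsubseteq D\mid\kappa)$ and $\mathcal{B}^{c}_{\mathcal{K}}(C\sqsubseteq D\mid\kappa)$ are the infimum and supremum of $\Pr_{\mathcal{P}}(C\sqsubseteq D\mid\kappa)$ over $\mathcal{P}\in\mathrm{Mod}_{ME}(\mathcal{K})$. *)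

theory Defs
  imports Complex_Main
begin

datatype 'v pform =
    PVar 'v | PTop | PBot | PNot "'v pform"
  | PAnd "'v pform" "'v pform" | POr "'v pform" "'v pform" | PImp "'v pform" "'v pform"

type_synonym 'v tassign = "'v \<Rightarrow> bool"

fun psat :: "'v tassign \<Rightarrow> 'v pform \<Rightarrow> bool" where
  "psat v (PVar a) = v a"
| "psat v PTop = True"
| "psat v PBot = False"
| "psat v (PNot f) = (\<not> psat v f)"
| "psat v (PAnd f g) = (psat v f \<and> psat v g)"
| "psat v (POr f g) = (psat v f \<or> psat v g)"
| "psat v (PImp f g) = (psat v f \<longrightarrow> psat v g)"

definition is_distr :: "(('v::finite) tassign \<Rightarrow> real) \<Rightarrow> bool" where
  "is_distr P \<longleftrightarrow> (\<forall>v. 0 \<le> P v \<and> P v \<le> 1) \<and> (\<Sum>v\<in>UNIV. P v) = 1"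

definition prob :: "(('v::finite) tassign \<Rightarrow> real) \<Rightarrow> 'v pform \<Rightarrow> real" where
  "prob P f = (\<Sum>v\<in>{v. psat v f}. P v)"

definition cprob :: "(('v::finite) tassign \<Rightarrow> real) \<Rightarrow> 'v pform \<Rightarrow> 'v pform \<Rightarrow> real" where
  "cprob P f k = prob P (PAnd f k) / prob P k"

text \<open>A probabilistic constraint c0 + \<Sum>i c_i p(phi_i) \<ge> 0 is the pair (c0, [(c_1,phi_1),...]).\<close>
type_synonym 'v pconstr = "real \<times> (real \<times> 'v pform) list"

definition sat_constr :: "(('v::finite) tassign \<Rightarrow> real) \<Rightarrow> 'v pconstr \<Rightarrow> bool" where
  "sat_constr P c \<longleftrightarrow> fst c + (\<Sum>(ci, fi)\<leftarrow>snd c. ci * prob P fi) \<ge> 0"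

definition ModR :: "('v::finite) pconstr set \<Rightarrow> ('v tassign \<Rightarrow> real) set" where
  "ModR R = {P. is_distr P \<and> (\<forall>c\<in>R. sat_constr P c)}"

definition entropy :: "(('v::finite) tassign \<Rightarrow> real) \<Rightarrow> real" where
  "entropy P = - (\<Sum>v\<in>UNIV. P v * ln (P v))"

definition consistentR :: "('v::finite) pconstr set \<Rightarrow> bool" where
  "consistentR R \<longleftrightarrow> ModR R \<noteq> {}"

definition PME :: "('v::finite) pconstr set \<Rightarrow> ('v tassign \<Rightarrow> real)" where
  "PME R = (THE P. P \<in> ModR R \<and> (\<forall>Q\<in>ModR R. entropy Q \<le> entropy P))"

datatype ('c, 'r) concept =
    CAtom 'c | CNot "('c, 'r) concept" | CAnd "('c, 'r) concept" "('c, 'r) concept"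
  | CEx 'r "('c, 'r) concept"

type_synonym ('c, 'r, 'd) interp = "'d set \<times> ('c \<Rightarrow> 'd set) \<times> ('r \<Rightarrow> ('d \<times> 'd) set)"

definition wf_interp :: "('c, 'r, 'd) interp \<Rightarrow> bool" where
  "wf_interp I \<longleftrightarrow> (case I of (\<Delta>, A, R) \<Rightarrow>
     \<Delta> \<noteq> {} \<and> (\<forall>a. A a \<subseteq> \<Delta>) \<and> (\<forall>r. R r \<subseteq> \<Delta> \<times> \<Delta>))"

fun ext :: "('c, 'r, 'd) interp \<Rightarrow> ('c, 'r) concept \<Rightarrow> 'd set" where
  "ext (\<Delta>, A, R) (CAtom a) = A a"
| "ext (\<Delta>, A, R) (CNot C) = \<Delta> - ext (\<Delta>, A, R) C"
| "ext I (CAnd C D) = ext I C \<inter> ext I D"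
| "ext (\<Delta>, A, R) (CEx r C) = {x\<in>\<Delta>. \<exists>y. (x, y) \<in> R r \<and> y \<in> ext (\<Delta>, A, R) C}"

text \<open>L-GCI <C \<sqsubseteq> D : kappa> is the triple (C, D, kappa).\<close>
type_synonym ('c, 'r, 'v) gci = "('c, 'r) concept \<times> ('c, 'r) concept \<times> 'v pform"

type_synonym ('c, 'r, 'd, 'v) pworld = "('c, 'r, 'd) interp \<times> 'v tassign"

definition world_models :: "('c, 'r, 'd, 'v) pworld \<Rightarrow> ('c, 'r, 'v) gci \<Rightarrow> bool" where
  "world_models W g \<longleftrightarrow> (case g of (C, D, k) \<Rightarrow>
     \<not> psat (snd W) k \<or> ext (fst W) C \<subseteq> ext (fst W) D)"

definition Tw :: "('c, 'r, 'v) gci set \<Rightarrow> 'v tassign \<Rightarrow> (('c, 'r) concept \<times> ('c, 'r) concept) set" where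
  "Tw T w = {(C, D). \<exists>k. (C, D, k) \<in> T \<and> psat w k}"

definition classical_model :: "('c, 'r, 'd) interp \<Rightarrow> (('c, 'r) concept \<times> ('c, 'r) concept) set \<Rightarrow> bool" where
  "classical_model I S \<longleftrightarrow> wf_interp I \<and> (\<forall>(C, D)\<in>S. ext I C \<subseteq> ext I D)"

text \<open>Entailment and strong non-subsumption w.r.t. classical interpretations whose
  domains are subsets of the (arbitrary) type 'd.\<close>
definition entails :: "'d itself \<Rightarrow> (('c, 'r) concept \<times> ('c, 'r) concept) set
    \<Rightarrow> ('c, 'r) concept \<Rightarrow> ('c, 'r) concept \<Rightarrow> bool" where
  "entails _ S C D \<longleftrightarrow> (\<forall>I :: ('c, 'r, 'd) interp. classical_model I S \<longrightarrow> ext I C \<subseteq> ext I D)"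

definition strongly_non_subsumed :: "'d itself \<Rightarrow> (('c, 'r) concept \<times> ('c, 'r) concept) set
    \<Rightarrow> ('c, 'r) concept \<Rightarrow> ('c, 'r) concept \<Rightarrow> bool" where
  "strongly_non_subsumed _ S C D \<longleftrightarrow>
     (\<forall>I :: ('c, 'r, 'd) interp. classical_model I S \<longrightarrow> \<not> ext I C \<subseteq> ext I D)"

definition consequence_formula :: "'d itself \<Rightarrow> ('c, 'r, 'v) gci set
    \<Rightarrow> ('c, 'r) concept \<Rightarrow> ('c, 'r) concept \<Rightarrow> 'v pform \<Rightarrow> bool" where
  "consequence_formula d T C D f \<longleftrightarrow> (\<forall>w. psat w f \<longleftrightarrow> entails d (Tw T w) C D)"

definition nonsub_consequence_formula :: "'d itself \<Rightarrow> ('c, 'r, 'v) gci set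
    \<Rightarrow> ('c, 'r) concept \<Rightarrow> ('c, 'r) concept \<Rightarrow> 'v pform \<Rightarrow> bool" where
  "nonsub_consequence_formula d T C D f \<longleftrightarrow>
     (\<forall>w. psat w f \<longleftrightarrow> strongly_non_subsumed d (Tw T w) C D)"

type_synonym ('c, 'r, 'd, 'v) alcp_interp =
  "('c, 'r, 'd, 'v) pworld set \<times> (('c, 'r, 'd, 'v) pworld \<Rightarrow> real)"

definition wf_alcp :: "('c, 'r, 'd, 'v) alcp_interp \<Rightarrow> bool" where
  "wf_alcp P \<longleftrightarrow> (case P of (\<J>, p) \<Rightarrow>
     finite \<J> \<and> \<J> \<noteq> {} \<and> (\<forall>W\<in>\<J>. wf_interp (fst W))
     \<and> (\<forall>W\<in>\<J>. 0 \<le> p W) \<and> (\<Sum>W\<in>\<J>. p W) = 1)"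

definition induced_distr :: "('c, 'r, 'd, 'v) alcp_interp \<Rightarrow> 'v tassign \<Rightarrow> real" where
  "induced_distr P v = (\<Sum>W\<in>{W\<in>fst P. snd W = v}. snd P W)"

type_synonym ('c, 'r, 'v) kb = "'v pconstr set \<times> ('c, 'r, 'v) gci set"

definition ME_models :: "'d itself \<Rightarrow> ('c, 'r, 'v::finite) kb \<Rightarrow> ('c, 'r, 'd, 'v) alcp_interp set" where
  "ME_models _ K = {P. wf_alcp P \<and> (\<forall>W\<in>fst P. \<forall>g\<in>snd K. world_models W g)
                       \<and> induced_distr P = PME (fst K)}"

definition ME_consistent :: "'d itself \<Rightarrow> ('c, 'r, 'v::finite) kb \<Rightarrow> bool" where
  "ME_consistent d K \<longleftrightarrow> consistentR (fst K) \<and> ME_models d K \<noteq> {}"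

definition Pr_sub :: "('c, 'r, 'd, 'v) alcp_interp \<Rightarrow> ('c, 'r) concept \<Rightarrow> ('c, 'r) concept
    \<Rightarrow> 'v pform \<Rightarrow> real" where
  "Pr_sub P C D k =
     (\<Sum>W\<in>{W\<in>fst P. psat (snd W) k \<and> ext (fst W) C \<subseteq> ext (fst W) D}. snd P W)
     / (\<Sum>W\<in>{W\<in>fst P. psat (snd W) k}. snd P W)"

definition B_s :: "'d itself \<Rightarrow> ('c, 'r, 'v::finite) kb \<Rightarrow> ('c, 'r) concept \<Rightarrow> ('c, 'r) concept
    \<Rightarrow> 'v pform \<Rightarrow> real" where
  "B_s d K C D k = Inf ((\<lambda>P. Pr_sub P C D k) ` ME_models d K)"

definition B_c :: "'d itself \<Rightarrow> ('c, 'r, 'v::finite) kb \<Rightarrow> ('c, 'r) concept \<Rightarrow> ('c, 'r) concept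
    \<Rightarrow> 'v pform \<Rightarrow> real" where
  "B_c d K C D k = Sup ((\<lambda>P. Pr_sub P C D k) ` ME_models d K)"

end

theory Submission
  imports Defs
begin

lemma regroup:
  fixes J :: "('c,'r,'d,'v::finite) pworld set" and K :: "('c,'r,'v) kb"
  assumes "(J,p) \<in> ME_models d K"
  shows "(\<Sum>W\<in>{W\<in>J. S (snd W)}. p W) = (\<Sum>v\<in>{v. S v}. PME (fst K) v)"
proof -
  from assms have fin: "finite J" and ind: "induced_distr (J,p) = PME (fst K)"
    by (auto simp: ME_models_def wf_alcp_def)
  have e: "{x\<in>{W\<in>J. S (snd W)}. snd x = v} = {W\<in>J. snd W = v}" if "S v" for v
    using that by auto
  have "(\<Sum>v\<in>{v. S v}. PME (fst K) v) = (\<Sum>v\<in>{v. S v}. \<Sum>W\<in>{x. x\<in>{W\<in>J. S (snd W)} \<and> snd x = v}. p W)"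
    by (rule sum.cong[OF refl]) (auto simp: ind[symmetric] induced_distr_def intro!: sum.cong)
  also have "\<dots> = (\<Sum>W\<in>{W\<in>J. S (snd W)}. p W)"
    by (rule sum.group) (use fin in auto)
  finally show ?thesis by simp
qed

lemma world_cm:
  fixes J :: "('c,'r,'d,'v::finite) pworld set" and K :: "('c,'r,'v) kb"
  assumes "(J,p) \<in> ME_models d K" "W \<in> J"
  shows "classical_model (fst W) (Tw (snd K) (snd W))"
proof -
  from assms have wf: "wf_interp (fst W)" and wm: "\<forall>g\<in>snd K. world_models W g"
    by (auto simp: ME_models_def wf_alcp_def)
  show ?thesis unfolding classical_model_def
  proof (intro conjI wf ballI)
    fix x assume "x \<in> Tw (snd K) (snd W)"
    then obtain C' D' k where x: "x = (C',D')" "(C',D',k) \<in> snd K" "psat (snd W) k"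
      by (auto simp: Tw_def)
    with wm have "world_models W (C',D',k)" by blast
    with x show "case x of (C, D) \<Rightarrow> ext (fst W) C \<subseteq> ext (fst W) D"
      by (auto simp: world_models_def)
  qed
qed

lemma construct:
  fixes f :: "'v::finite tassign \<Rightarrow> ('c,'r,'d) interp" and K :: "('c,'r,'v) kb"
  assumes Qnn: "\<forall>v. 0 \<le> PME (fst K) v" and Qs: "(\<Sum>v\<in>UNIV. PME (fst K) v) = 1"
    and fm: "\<forall>v. PME (fst K) v > 0 \<longrightarrow> classical_model (f v) (Tw (snd K) v)"
  shows "((\<lambda>v. (f v, v)) ` {v. PME (fst K) v > 0}, \<lambda>W. PME (fst K) (snd W)) \<in> ME_models TYPE('d) K"
proof -
  define Q where "Q = PME (fst K)"
  define A where "A = {v. Q v > 0}"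
  define J where "J = (\<lambda>v. (f v, v)) ` A"
  have inj: "inj_on (\<lambda>v. (f v, v)) A" by (auto simp: inj_on_def)
  have sA: "sum Q A = 1"
  proof -
    have "sum Q A = sum Q UNIV"
      by (rule sum.mono_neutral_left) (use Qnn in \<open>auto simp: A_def Q_def intro: antisym\<close>)
    thus ?thesis using Qs Q_def by simp
  qed
  have sJ: "(\<Sum>W\<in>J. Q (snd W)) = 1"
    unfolding J_def by (subst sum.reindex[OF inj]) (simp add: sA)
  have Ane: "A \<noteq> {}" using sA by auto
  have wf: "wf_alcp (J, \<lambda>W::(('c,'r,'d) interp \<times> 'v tassign). Q (snd W))"
    unfolding wf_alcp_def using Ane sJ fm Qnn
    by (auto simp: J_def A_def Q_def classical_model_def)
  have wm: "\<forall>W\<in>J. \<forall>g\<in>snd K. world_models W g"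
  proof (intro ballI)
    fix W g assume W: "W \<in> J" and g: "g \<in> snd K"
    obtain v where v: "W = (f v, v)" "Q v > 0" using W by (auto simp: J_def A_def)
    obtain C' D' k where gg: "g = (C',D',k)" by (cases g) auto
    have cm: "classical_model (f v) (Tw (snd K) v)" using fm v Q_def by auto
    show "world_models W g"
    proof (cases "psat v k")
      case True
      hence "(C',D') \<in> Tw (snd K) v" using g gg by (auto simp: Tw_def)
      thus ?thesis using cm v gg by (auto simp: world_models_def classical_model_def)
    qed (auto simp: world_models_def v gg)
  qed
  have ind: "induced_distr (J, \<lambda>W. Q (snd W)) = Q"
  proof
    fix v
    have "{W\<in>J. snd W = v} = (if Q v > 0 then {(f v, v)} else {})"
      by (auto simp: J_def A_def)
    thus "induced_distr (J, \<lambda>W. Q (snd W)) v = Q v"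
      using Qnn unfolding Q_def by (auto simp: induced_distr_def intro: antisym)
  qed
  show ?thesis using wf wm ind
    by (simp add: ME_models_def J_def A_def Q_def)
qed

lemma entailsD: "entails TYPE('d) S C D \<Longrightarrow> classical_model (I::('c,'r,'d) interp) S \<Longrightarrow> ext I C \<subseteq> ext I D"
  unfolding entails_def by blast

lemma snsD: "strongly_non_subsumed TYPE('d) S C D \<Longrightarrow> classical_model (I::('c,'r,'d) interp) S \<Longrightarrow> \<not> ext I C \<subseteq> ext I D"
  unfolding strongly_non_subsumed_def by blast

lemma not_entailsD: "\<not> entails TYPE('d) S C D \<Longrightarrow> \<exists>I::('c,'r,'d) interp. classical_model I S \<and> \<not> ext I C \<subseteq> ext I D"
  unfolding entails_def by blast

lemma not_snsD: "\<not> strongly_non_subsumed TYPE('d) S C D \<Longrightarrow> \<exists>I::('c,'r,'d) interp. classical_model I S \<and> ext I C \<subseteq> ext I D"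
  unfolding strongly_non_subsumed_def by blast

lemma prob_split:
  fixes Q :: "'v::finite tassign \<Rightarrow> real"
  shows "prob Q k = prob Q (PAnd f k) + (\<Sum>v\<in>{v. psat v k \<and> \<not> psat v f}. Q v)"
proof -
  have "prob Q k = sum Q ({v. psat v k} \<inter> {v. psat v f}) + sum Q ({v. psat v k} - {v. psat v f})"
    unfolding prob_def by (rule sum.Int_Diff) simp
  moreover have "{v. psat v k} \<inter> {v. psat v f} = {v. psat v (PAnd f k)}" by auto
  moreover have "{v. psat v k} - {v. psat v f} = {v. psat v k \<and> \<not> psat v f}" by auto
  ultimately show ?thesis by (simp add: prob_def)
qed

theorem theorem5:
  fixes K :: "('c, 'r, 'v::finite) kb"
    and C D :: "('c, 'r) concept"
    and \<phi> \<psi> \<kappa> :: "'v pform"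
  assumes "finite (snd K)"
    and "ME_consistent TYPE('d) K"
    and "consequence_formula TYPE('d) (snd K) C D \<phi>"
    and "nonsub_consequence_formula TYPE('d) (snd K) C D \<psi>"
    and "prob (PME (fst K)) \<kappa> > 0"
  shows "B_s TYPE('d) K C D \<kappa> = cprob (PME (fst K)) \<phi> \<kappa>
       \<and> B_c TYPE('d) K C D \<kappa> = 1 - cprob (PME (fst K)) \<psi> \<kappa>"
proof -
  define Q where "Q = PME (fst K)"
  define T where "T = snd K"
  define M where "M = (ME_models TYPE('d) K :: ('c,'r,'d,'v) alcp_interp set)"
  have cf: "\<And>w. psat w \<phi> \<longleftrightarrow> entails TYPE('d) (Tw T w) C D"
    using assms(3) by (simp add: consequence_formula_def T_def)
  have ncf: "\<And>w. psat w \<psi> \<longleftrightarrow> strongly_non_subsumed TYPE('d) (Tw T w) C D"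
    using assms(4) by (simp add: nonsub_consequence_formula_def T_def)
  have kp: "prob Q \<kappa> > 0" using assms(5) Q_def by simp
  obtain J0 p0 where P0: "(J0,p0) \<in> M"
    using assms(2) by (auto simp: ME_consistent_def M_def)
  have wf0: "wf_alcp (J0,p0)" and ind0: "induced_distr (J0,p0) = Q"
    using P0 by (auto simp: M_def ME_models_def Q_def)
  have Qnn: "\<forall>v. 0 \<le> Q v"
  proof
    fix v show "0 \<le> Q v" using wf0 unfolding ind0[symmetric] induced_distr_def wf_alcp_def
      by (auto intro!: sum_nonneg)
  qed
  have Qs: "(\<Sum>v\<in>UNIV. Q v) = 1"
  proof -
    have "(\<Sum>W\<in>{W\<in>J0. True}. p0 W) = (\<Sum>v\<in>{v. True}. Q v)"
      using regroup[OF P0[unfolded M_def], of "\<lambda>_. True"] Q_def by simp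
    thus ?thesis using wf0 by (simp add: wf_alcp_def)
  qed
  have ex: "\<exists>I. classical_model I (Tw T v) \<and> I \<in> (UNIV :: ('c,'r,'d) interp set)" if "Q v > 0" for v
  proof -
    have "{W\<in>J0. snd W = v} \<noteq> {}"
    proof
      assume "{W\<in>J0. snd W = v} = {}"
      hence "Q v = 0" unfolding ind0[symmetric] induced_distr_def by (simp only: fst_conv snd_conv sum.empty)
      thus False using that by simp
    qed
    then obtain W where "W \<in> J0" "snd W = v" by auto
    thus ?thesis using world_cm[OF P0[unfolded M_def]] T_def by blast
  qed
  have den: "(\<Sum>W\<in>{W\<in>fst P. psat (snd W) \<kappa>}. snd P W) = prob Q \<kappa>" if "P \<in> M" for P
  proof -
    obtain J p where P: "P = (J,p)" by (cases P)
    show ?thesis using regroup[of J p "TYPE('d)" K "\<lambda>v. psat v \<kappa>"] that P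
      by (simp add: M_def Q_def prob_def)
  qed
  have lower: "cprob Q \<phi> \<kappa> \<le> Pr_sub P C D \<kappa>" if "P \<in> M" for P
  proof -
    obtain J p where P: "P = (J,p)" by (cases P)
    have JM: "(J,p) \<in> ME_models TYPE('d) K" using that P M_def by simp
    have pn: "\<forall>W\<in>J. 0 \<le> p W" using JM by (auto simp: ME_models_def wf_alcp_def)
    have fin: "finite J" using JM by (auto simp: ME_models_def wf_alcp_def)
    have sub: "{W\<in>J. psat (snd W) (PAnd \<phi> \<kappa>)} \<subseteq> {W\<in>J. psat (snd W) \<kappa> \<and> ext (fst W) C \<subseteq> ext (fst W) D}"
    proof
      fix W assume W: "W \<in> {W\<in>J. psat (snd W) (PAnd \<phi> \<kappa>)}"
      hence "entails TYPE('d) (Tw T (snd W)) C D" using cf by auto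
      moreover have "classical_model (fst W) (Tw T (snd W))"
        using world_cm[OF JM] W T_def by auto
      ultimately have "ext (fst W) C \<subseteq> ext (fst W) D" by (rule entailsD)
      then show "W \<in> {W\<in>J. psat (snd W) \<kappa> \<and> ext (fst W) C \<subseteq> ext (fst W) D}" using W by simp
    qed
    have "prob Q (PAnd \<phi> \<kappa>) = (\<Sum>W\<in>{W\<in>J. psat (snd W) (PAnd \<phi> \<kappa>)}. p W)"
      using regroup[OF JM, of "\<lambda>v. psat v (PAnd \<phi> \<kappa>)"] by (simp add: prob_def Q_def)
    also have "\<dots> \<le> (\<Sum>W\<in>{W\<in>J. psat (snd W) \<kappa> \<and> ext (fst W) C \<subseteq> ext (fst W) D}. p W)"
      by (rule sum_mono2) (use fin sub pn in auto)
    finally have "prob Q (PAnd \<phi> \<kappa>) \<le> (\<Sum>W\<in>{W\<in>J. psat (snd W) \<kappa> \<and> ext (fst W) C \<subseteq> ext (fst W) D}. p W)" .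
    thus ?thesis using den[OF that] kp P
      by (simp add: cprob_def Pr_sub_def divide_right_mono)
  qed
  have upper: "Pr_sub P C D \<kappa> \<le> 1 - cprob Q \<psi> \<kappa>" if "P \<in> M" for P
  proof -
    obtain J p where P: "P = (J,p)" by (cases P)
    have JM: "(J,p) \<in> ME_models TYPE('d) K" using that P M_def by simp
    have pn: "\<forall>W\<in>J. 0 \<le> p W" using JM by (auto simp: ME_models_def wf_alcp_def)
    have fin: "finite J" using JM by (auto simp: ME_models_def wf_alcp_def)
    have sub: "{W\<in>J. psat (snd W) \<kappa> \<and> ext (fst W) C \<subseteq> ext (fst W) D} \<subseteq> {W\<in>J. psat (snd W) \<kappa> \<and> \<not> psat (snd W) \<psi>}"
    proof
      fix W assume W: "W \<in> {W\<in>J. psat (snd W) \<kappa> \<and> ext (fst W) C \<subseteq> ext (fst W) D}"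
      have "classical_model (fst W) (Tw T (snd W))"
        using world_cm[OF JM] W T_def by auto
      moreover have "ext (fst W) C \<subseteq> ext (fst W) D" using W by simp
      ultimately have "\<not> strongly_non_subsumed TYPE('d) (Tw T (snd W)) C D"
        using snsD by blast
      thus "W \<in> {W\<in>J. psat (snd W) \<kappa> \<and> \<not> psat (snd W) \<psi>}" using W ncf by auto
    qed
    have "(\<Sum>W\<in>{W\<in>J. psat (snd W) \<kappa> \<and> ext (fst W) C \<subseteq> ext (fst W) D}. p W)
        \<le> (\<Sum>W\<in>{W\<in>J. psat (snd W) \<kappa> \<and> \<not> psat (snd W) \<psi>}. p W)"
      by (rule sum_mono2) (use fin sub pn in auto)
    also have "\<dots> = (\<Sum>v\<in>{v. psat v \<kappa> \<and> \<not> psat v \<psi>}. Q v)"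
      using regroup[OF JM, of "\<lambda>v. psat v \<kappa> \<and> \<not> psat v \<psi>"] by (simp add: Q_def)
    also have "\<dots> = prob Q \<kappa> - prob Q (PAnd \<psi> \<kappa>)" using prob_split[of Q \<kappa> \<psi>] by simp
    finally have N: "(\<Sum>W\<in>{W\<in>J. psat (snd W) \<kappa> \<and> ext (fst W) C \<subseteq> ext (fst W) D}. p W)
        \<le> prob Q \<kappa> - prob Q (PAnd \<psi> \<kappa>)" .
    have "1 - cprob Q \<psi> \<kappa> = (prob Q \<kappa> - prob Q (PAnd \<psi> \<kappa>)) / prob Q \<kappa>"
      using kp by (simp add: cprob_def field_simps)
    thus ?thesis using N den[OF that] kp P
      by (simp add: Pr_sub_def divide_right_mono)
  qed
  define f1 :: "'v tassign \<Rightarrow> ('c,'r,'d) interp" where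
    "f1 v = (if psat v \<phi> then (SOME I. classical_model I (Tw T v))
             else (SOME I. classical_model I (Tw T v) \<and> \<not> ext I C \<subseteq> ext I D))" for v
  have f1: "classical_model (f1 v) (Tw T v) \<and> (\<not> psat v \<phi> \<longrightarrow> \<not> ext (f1 v) C \<subseteq> ext (f1 v) D)"
    if "Q v > 0" for v
  proof (cases "psat v \<phi>")
    case True
    have "\<exists>I::('c,'r,'d) interp. classical_model I (Tw T v)" using ex[OF that] by blast
    hence "classical_model (SOME I::('c,'r,'d) interp. classical_model I (Tw T v)) (Tw T v)" by (rule someI_ex)
    then show ?thesis using True by (simp add: f1_def)
  next
    case False
    hence "\<exists>I::('c,'r,'d) interp. classical_model I (Tw T v) \<and> \<not> ext I C \<subseteq> ext I D"
      using cf[of v] by (intro not_entailsD) simp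
    hence "classical_model (SOME I::('c,'r,'d) interp. classical_model I (Tw T v) \<and> \<not> ext I C \<subseteq> ext I D) (Tw T v) \<and> (\<lambda>I. \<not> ext I C \<subseteq> ext I D) (SOME I::('c,'r,'d) interp. classical_model I (Tw T v) \<and> \<not> ext I C \<subseteq> ext I D)" by (rule someI_ex)
    then show ?thesis using False by (simp add: f1_def)
  qed
  define f2 :: "'v tassign \<Rightarrow> ('c,'r,'d) interp" where
    "f2 v = (if psat v \<psi> then (SOME I. classical_model I (Tw T v))
             else (SOME I. classical_model I (Tw T v) \<and> ext I C \<subseteq> ext I D))" for v
  have f2: "classical_model (f2 v) (Tw T v) \<and> (\<not> psat v \<psi> \<longrightarrow> ext (f2 v) C \<subseteq> ext (f2 v) D)"
    if "Q v > 0" for v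
  proof (cases "psat v \<psi>")
    case True
    have "\<exists>I::('c,'r,'d) interp. classical_model I (Tw T v)" using ex[OF that] by blast
    hence "classical_model (SOME I::('c,'r,'d) interp. classical_model I (Tw T v)) (Tw T v)" by (rule someI_ex)
    then show ?thesis using True by (simp add: f2_def)
  next
    case False
    hence "\<exists>I::('c,'r,'d) interp. classical_model I (Tw T v) \<and> ext I C \<subseteq> ext I D"
      using ncf[of v] by (intro not_snsD) simp
    hence "classical_model (SOME I::('c,'r,'d) interp. classical_model I (Tw T v) \<and> ext I C \<subseteq> ext I D) (Tw T v) \<and> (\<lambda>I. ext I C \<subseteq> ext I D) (SOME I::('c,'r,'d) interp. classical_model I (Tw T v) \<and> ext I C \<subseteq> ext I D)" by (rule someI_ex)
    then show ?thesis using False by (simp add: f2_def)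
  qed
  define M1 where "M1 = ((\<lambda>v. (f1 v, v)) ` {v. Q v > 0}, \<lambda>W::(('c,'r,'d) interp \<times> 'v tassign). Q (snd W))"
  define M2 where "M2 = ((\<lambda>v. (f2 v, v)) ` {v. Q v > 0}, \<lambda>W::(('c,'r,'d) interp \<times> 'v tassign). Q (snd W))"
  have M1: "M1 \<in> M" unfolding M1_def M_def Q_def
  proof (rule construct)
    show "\<forall>v. 0 \<le> PME (fst K) v" using Qnn Q_def by simp
    show "(\<Sum>v\<in>UNIV. PME (fst K) v) = 1" using Qs Q_def by simp
    show "\<forall>v. PME (fst K) v > 0 \<longrightarrow> classical_model (f1 v) (Tw (snd K) v)"
      using f1 unfolding Q_def T_def by blast
  qed
  have M2: "M2 \<in> M" unfolding M2_def M_def Q_def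
  proof (rule construct)
    show "\<forall>v. 0 \<le> PME (fst K) v" using Qnn Q_def by simp
    show "(\<Sum>v\<in>UNIV. PME (fst K) v) = 1" using Qs Q_def by simp
    show "\<forall>v. PME (fst K) v > 0 \<longrightarrow> classical_model (f2 v) (Tw (snd K) v)"
      using f2 unfolding Q_def T_def by blast
  qed
  have a1: "Pr_sub M1 C D \<kappa> = cprob Q \<phi> \<kappa>"
  proof -
    have JM: "M1 \<in> ME_models TYPE('d) K" using M1 M_def by simp
    have e: "{W\<in>fst M1. psat (snd W) \<kappa> \<and> ext (fst W) C \<subseteq> ext (fst W) D} = {W\<in>fst M1. psat (snd W) (PAnd \<phi> \<kappa>)}"
    proof (intro set_eqI iffI)
      fix W assume W: "W \<in> {W\<in>fst M1. psat (snd W) \<kappa> \<and> ext (fst W) C \<subseteq> ext (fst W) D}"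
      then obtain v where "W = (f1 v, v)" "Q v > 0" by (auto simp: M1_def)
      thus "W \<in> {W\<in>fst M1. psat (snd W) (PAnd \<phi> \<kappa>)}" using W f1 by auto
    next
      fix W assume W: "W \<in> {W\<in>fst M1. psat (snd W) (PAnd \<phi> \<kappa>)}"
      hence "entails TYPE('d) (Tw T (snd W)) C D" using cf by auto
      moreover have "classical_model (fst W) (Tw T (snd W))"
        using world_cm[of "fst M1" "snd M1"] JM W T_def by auto
      ultimately have "ext (fst W) C \<subseteq> ext (fst W) D" by (rule entailsD)
      then show "W \<in> {W\<in>fst M1. psat (snd W) \<kappa> \<and> ext (fst W) C \<subseteq> ext (fst W) D}" using W by simp
    qed
    have "(\<Sum>W\<in>{W\<in>fst M1. psat (snd W) (PAnd \<phi> \<kappa>)}. snd M1 W) = prob Q (PAnd \<phi> \<kappa>)"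
      using regroup[of "fst M1" "snd M1" "TYPE('d)" K "\<lambda>v. psat v (PAnd \<phi> \<kappa>)"] JM
      by (simp add: prob_def Q_def)
    thus ?thesis using e den[OF M1] by (simp add: Pr_sub_def cprob_def)
  qed
  have a2: "Pr_sub M2 C D \<kappa> = 1 - cprob Q \<psi> \<kappa>"
  proof -
    have JM: "M2 \<in> ME_models TYPE('d) K" using M2 M_def by simp
    have e: "{W\<in>fst M2. psat (snd W) \<kappa> \<and> ext (fst W) C \<subseteq> ext (fst W) D} = {W\<in>fst M2. psat (snd W) \<kappa> \<and> \<not> psat (snd W) \<psi>}"
    proof (intro set_eqI iffI)
      fix W assume W: "W \<in> {W\<in>fst M2. psat (snd W) \<kappa> \<and> \<not> psat (snd W) \<psi>}"
      then obtain v where "W = (f2 v, v)" "Q v > 0" by (auto simp: M2_def)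
      thus "W \<in> {W\<in>fst M2. psat (snd W) \<kappa> \<and> ext (fst W) C \<subseteq> ext (fst W) D}" using W f2 by auto
    next
      fix W assume W: "W \<in> {W\<in>fst M2. psat (snd W) \<kappa> \<and> ext (fst W) C \<subseteq> ext (fst W) D}"
      have "classical_model (fst W) (Tw T (snd W))"
        using world_cm[of "fst M2" "snd M2"] JM W T_def by auto
      moreover have "ext (fst W) C \<subseteq> ext (fst W) D" using W by simp
      ultimately have "\<not> strongly_non_subsumed TYPE('d) (Tw T (snd W)) C D"
        using snsD by blast
      thus "W \<in> {W\<in>fst M2. psat (snd W) \<kappa> \<and> \<not> psat (snd W) \<psi>}" using W ncf by auto
    qed
    have "(\<Sum>W\<in>{W\<in>fst M2. psat (snd W) \<kappa> \<and> \<not> psat (snd W) \<psi>}. snd M2 W) = (\<Sum>v\<in>{v. psat v \<kappa> \<and> \<not> psat v \<psi>}. Q v)"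
      using regroup[of "fst M2" "snd M2" "TYPE('d)" K "\<lambda>v. psat v \<kappa> \<and> \<not> psat v \<psi>"] JM
      by (simp add: Q_def)
    also have "\<dots> = prob Q \<kappa> - prob Q (PAnd \<psi> \<kappa>)" using prob_split[of Q \<kappa> \<psi>] by simp
    finally have N: "(\<Sum>W\<in>{W\<in>fst M2. psat (snd W) \<kappa> \<and> ext (fst W) C \<subseteq> ext (fst W) D}. snd M2 W) = prob Q \<kappa> - prob Q (PAnd \<psi> \<kappa>)"
      using e by simp
    have "1 - cprob Q \<psi> \<kappa> = (prob Q \<kappa> - prob Q (PAnd \<psi> \<kappa>)) / prob Q \<kappa>"
      using kp by (simp add: cprob_def field_simps)
    thus ?thesis using N den[OF M2] by (simp add: Pr_sub_def)
  qed
  have "B_s TYPE('d) K C D \<kappa> = cprob Q \<phi> \<kappa>"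
    unfolding B_s_def M_def[symmetric]
    by (rule cInf_eq_minimum) (use M1 a1 lower in \<open>force+\<close>)
  moreover have "B_c TYPE('d) K C D \<kappa> = 1 - cprob Q \<psi> \<kappa>"
    unfolding B_c_def M_def[symmetric]
    by (rule cSup_eq_maximum) (use M2 a2 upper in \<open>force+\<close>)
  ultimately show ?thesis by (simp add: Q_def)
qed

end
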